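(* Fix $\beta>2$ and let $F_\beta(\mathbf{x},r)$, $r_2^\beta$, $\mathbf{m}_0^\beta(r)$, $\mathbf{m}_1^\beta(r)$, $\mathbf{m}_2^\beta(r)$ be as in the context. For $r\in(0,r_2^\beta)$, the three local minima of $F_\beta(\cdot,r)$ satisfy $$F_\beta(\mathbf{m}_1^\beta(r),r)=F_\beta(\mathbf{m}_2^\beta(r),r)<F_\beta(\mathbf{m}_0^\beta(r),r).$$ In particular, $\mathbf{m}_1^\beta(r)$ and $\mathbf{m}_2^\beta(r)$ are the global minima of $F_\beta(\cdot,r)$ for all $r>0$.
   Context: $\Xi=\{(x_1,x_2): x_1,x_2\ge0,\ x_1+x_2\le1\}$, $x_0=1-x_1-x_2$, $\mathbf{v}_k=(\cos(2\pi k/3),\sin(2\pi k/3))$, $F_\beta(\mathbf{x},r)=-\frac12|\sum_{k=0}^2x_k\mathbf{v}_k|^2+\frac1\beta\sum_{k=0}^2x_k\log(3x_k)+r\,x_0-\frac r2(x_1+x_2)$ (external field of magnitude $r\ge 0$, angle $\pi$). Let $h(t)=-3t(1-2t)\log\frac{1-2t}{t}-3t+1$, $f_r(t)=\frac{2}{3(1-r-3t)}\log\frac{1-2t}{t}$, $k_r=(1-r)/3$; for $0<r<1$, $m_0(r)$ is the unique solution in $(0,k_r)$ of $h(t)=r$, and $r_2^\beta$ is the unique $r\in(0,1)$ with $f_r(m_0(r))=\beta$. For $r\in(0,r_2^\beta)$, $p_\beta(r)$ is the unique solution of $f_r(t)=\beta$ in $(0,m_0(r))$ and $\mathbf{m}_0^\beta(r)=(p_\beta(r),p_\beta(r))$.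 Let $G_\beta(x)=\frac1\beta\log x-\frac32x$, $l_\beta=2/(3\beta)$, $g_\beta=G_\beta(l_\beta)$; for $y<g_\beta$, $H_\beta(y)<l_\beta<K_\beta(y)$ solve $G_\beta(x)=y$, and $H_\beta(g_\beta)=K_\beta(g_\beta)=l_\beta$. For $r>0$, $y_2^\beta(r)$ is the unique $y\le g_\beta$ with $H_\beta(y-3r/2)+H_\beta(y)+K_\beta(y)=1$, and $\mathbf{m}_1^\beta(r)=(H_\beta(y_2^\beta(r)),K_\beta(y_2^\beta(r)))$, $\mathbf{m}_2^\beta(r)=(K_\beta(y_2^\beta(r)),H_\beta(y_2^\beta(r)))$. For $r\in(0,r_2^\beta)$, $\mathbf{m}_0^\beta(r),\mathbf{m}_1^\beta(r),\mathbf{m}_2^\beta(r)$ are the local minima of $F_\beta(\cdot,r)$, and for $r>r_2^\beta$ the local minima are $\mathbf{m}_1^\beta(r),\mathbf{m}_2^\beta(r)$. *)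

theory Defs
  imports Complex_Main
begin

text \<open>The simplex Xi, points represented as pairs (x1, x2); x0 = 1 - x1 - x2.\<close>
definition Xi :: "(real \<times> real) set" where
  "Xi = {(x1, x2). x1 \<ge> 0 \<and> x2 \<ge> 0 \<and> x1 + x2 \<le> 1}"

definition vvec :: "nat \<Rightarrow> real \<times> real" where
  "vvec k = (cos (2 * pi * real k / 3), sin (2 * pi * real k / 3))"

definition coord :: "real \<times> real \<Rightarrow> nat \<Rightarrow> real" where
  "coord x k = (if k = 0 then 1 - fst x - snd x else if k = 1 then fst x else snd x)"

definition Fb :: "real \<Rightarrow> real \<times> real \<Rightarrow> real \<Rightarrow> real" where
  "Fb \<beta> x r =
     - (1/2) * ((\<Sum>k<3. coord x k * fst (vvec k))\<^sup>2 + (\<Sum>k<3. coord x k * snd (vvec k))\<^sup>2)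
     + (1/\<beta>) * (\<Sum>k<3. coord x k * ln (3 * coord x k))
     + r * coord x 0 - (r/2) * (coord x 1 + coord x 2)"

definition hfun :: "real \<Rightarrow> real" where
  "hfun t = - 3 * t * (1 - 2*t) * ln ((1 - 2*t) / t) - 3 * t + 1"

definition ffun :: "real \<Rightarrow> real \<Rightarrow> real" where
  "ffun r t = 2 / (3 * (1 - r - 3*t)) * ln ((1 - 2*t) / t)"

definition kfun :: "real \<Rightarrow> real" where
  "kfun r = (1 - r) / 3"

definition m0fun :: "real \<Rightarrow> real" where
  "m0fun r = (THE t. 0 < t \<and> t < kfun r \<and> hfun t = r)"

definition r2 :: "real \<Rightarrow> real" where
  "r2 \<beta> = (THE r. 0 < r \<and> r < 1 \<and> ffun r (m0fun r) = \<beta>)"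

definition pb :: "real \<Rightarrow> real \<Rightarrow> real" where
  "pb \<beta> r = (THE t. 0 < t \<and> t < m0fun r \<and> ffun r t = \<beta>)"

definition mm0 :: "real \<Rightarrow> real \<Rightarrow> real \<times> real" where
  "mm0 \<beta> r = (pb \<beta> r, pb \<beta> r)"

definition Gb :: "real \<Rightarrow> real \<Rightarrow> real" where
  "Gb \<beta> x = (1/\<beta>) * ln x - (3/2) * x"

definition lb :: "real \<Rightarrow> real" where
  "lb \<beta> = 2 / (3 * \<beta>)"

definition gb :: "real \<Rightarrow> real" where
  "gb \<beta> = Gb \<beta> (lb \<beta>)"

text \<open>For y < g: H(y) < l < K(y) solve G = y; H(g) = K(g) = l. Since G is strictly
  increasing on (0, l] and strictly decreasing on [l, \<infinity>), this is captured by:\<close>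
definition Hb :: "real \<Rightarrow> real \<Rightarrow> real" where
  "Hb \<beta> y = (if y = gb \<beta> then lb \<beta> else (THE x. 0 < x \<and> x < lb \<beta> \<and> Gb \<beta> x = y))"

definition Kb :: "real \<Rightarrow> real \<Rightarrow> real" where
  "Kb \<beta> y = (if y = gb \<beta> then lb \<beta> else (THE x. lb \<beta> < x \<and> Gb \<beta> x = y))"

definition y2 :: "real \<Rightarrow> real \<Rightarrow> real" where
  "y2 \<beta> r = (THE y. y \<le> gb \<beta> \<and> Hb \<beta> (y - 3 * r / 2) + Hb \<beta> y + Kb \<beta> y = 1)"

definition mm1 :: "real \<Rightarrow> real \<Rightarrow> real \<times> real" where
  "mm1 \<beta> r = (Hb \<beta> (y2 \<beta> r), Kb \<beta> (y2 \<beta> r))"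

definition mm2 :: "real \<Rightarrow> real \<Rightarrow> real \<times> real" where
  "mm2 \<beta> r = (Kb \<beta> (y2 \<beta> r), Hb \<beta> (y2 \<beta> r))"

end

theory Submission
  imports Defs "HOL-Analysis.Analysis" "HOL-Real_Asymp.Real_Asymp"
begin



definition wfx :: "real \<Rightarrow> real" where "wfx t = t * ln (3*t)"
definition psi :: "real \<Rightarrow> real \<Rightarrow> real" where "psi \<beta> t = (1/\<beta>) * wfx t - (3/4) * t^2"
definition Fe :: "real \<Rightarrow> real \<Rightarrow> real \<Rightarrow> real \<Rightarrow> real \<Rightarrow> real" where
  "Fe \<beta> r x0 x1 x2 = psi \<beta> x0 + psi \<beta> x1 + psi \<beta> x2 + r*x0 - r/2*(x1+x2) + 1/4"

lemma cos120: "cos (2*pi/3) = -1/2"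
proof -
  have "2*pi/3 = pi - pi/3" by simp
  then have "cos (2*pi/3) = cos (pi - pi/3)" by (rule arg_cong)
  also have "\<dots> = -1/2" by (simp only: cos_pi_minus cos_60)
  finally show ?thesis .
qed
lemma sin120: "sin (2*pi/3) = sqrt 3/2"
proof -
  have "2*pi/3 = pi - pi/3" by simp
  then have "sin (2*pi/3) = sin (pi - pi/3)" by (rule arg_cong)
  also have "\<dots> = sqrt 3/2" by (simp only: sin_pi_minus sin_60)
  finally show ?thesis .
qed
lemma cos240: "cos (2*pi*2/3) = -1/2"
proof -
  have "2*pi*2/3 = pi/3 + pi" by simp
  then have "cos (2*pi*2/3) = cos (pi/3 + pi)" by (rule arg_cong)
  also have "\<dots> = -1/2" by (simp only: cos_periodic_pi cos_60)
  finally show ?thesis .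
qed
lemma sin240: "sin (2*pi*2/3) = -sqrt 3/2"
proof -
  have "2*pi*2/3 = pi/3 + pi" by simp
  then have "sin (2*pi*2/3) = sin (pi/3 + pi)" by (rule arg_cong)
  also have "\<dots> = -sqrt 3/2" by (simp only: sin_periodic_pi sin_60)
  finally show ?thesis .
qed

lemma Fb_eq: "Fb \<beta> (a,b) r = Fe \<beta> r (1-a-b) a b"
proof -
  have s: "(\<Sum>k<3. f k) = f 0 + f 1 + f (2::nat)" for f :: "nat \<Rightarrow> real"
    by (simp add: eval_nat_numeral)
  have v: "vvec 0 = (1,0)" "vvec 1 = (-1/2, sqrt 3/2)" "vvec 2 = (-1/2, -sqrt 3/2)"
    unfolding vvec_def using cos120 sin120 cos240 sin240 by (auto simp: mult.commute)
  have c: "coord (a,b) 0 = 1-a-b" "coord (a,b) 1 = a" "coord (a,b) 2 = b"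
    by (auto simp: coord_def)
  have sq: "sqrt 3 * sqrt 3 = (3::real)" by simp
  show ?thesis unfolding Fb_def Fe_def psi_def wfx_def s v c
    by (simp add: power2_eq_square algebra_simps sq)
qed



lemma ln_gt_lin: "0 < (x::real) \<Longrightarrow> x \<noteq> 1 \<Longrightarrow> ln x < x - 1"
proof -
  assume x: "0 < x" "x \<noteq> 1"
  define s where "s = sqrt x"
  have s: "s > 0" "s * s = x" "s \<noteq> 1" using x unfolding s_def by auto
  have "ln x = ln s + ln s" using s(1) s(2)[symmetric] by (simp add: ln_mult)
  then have "ln x = 2 * ln s" by simp
  also have "\<dots> \<le> 2 * (s - 1)" using ln_le_minus_one[OF s(1)] by simp
  also have "\<dots> < x - 1"
  proof -
    have "(s-1)*(s-1) > 0" using s(3) by (auto simp add: zero_less_mult_iff)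
    then show ?thesis using s(2) by (simp add: algebra_simps)
  qed
  finally show ?thesis .
qed

lemma ln_gt_inv: "0 < (x::real) \<Longrightarrow> x \<noteq> 1 \<Longrightarrow> 1 - 1/x < ln x"
proof -
  assume x: "0 < x" "x \<noteq> 1"
  have "ln (1/x) < 1/x - 1" using x by (intro ln_gt_lin) (auto simp: field_simps)
  then show ?thesis using x by (simp add: ln_div)
qed

lemma lb_pos: "\<beta> > 0 \<Longrightarrow> lb \<beta> > 0" unfolding lb_def by simp

lemma G_mono_left:
  assumes b: "\<beta> > 0" and "0 < v" "v < u" "u \<le> lb \<beta>"
  shows "Gb \<beta> v < Gb \<beta> u"
proof -
  have "1 - v/u < ln (u/v)" using ln_gt_inv[of "u/v"] assms by (simp add: field_simps)
  then have "(u-v)/u < ln u - ln v" using assms by (simp add: ln_div field_simps)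
  moreover have "1/(\<beta>*u) \<ge> 3/2" using assms unfolding lb_def by (simp add: field_simps)
  then have "(u-v) * (1/(\<beta>*u)) \<ge> (u-v) * (3/2)" using assms
    by (intro mult_left_mono) auto
  then have "(u-v)/u * (1/\<beta>) \<ge> (3/2)*(u-v)" by (simp add: field_simps)
  moreover have "(1/\<beta>) * (ln u - ln v) > (1/\<beta>) * ((u-v)/u)"
    using calculation(1) b by (intro mult_strict_left_mono) auto
  moreover have "(1/\<beta>) * ((u-v)/u) = (u-v)/u * (1/\<beta>)" by simp
  ultimately have "(1/\<beta>) * (ln u - ln v) > (3/2)*(u-v)" by linarith
  moreover have "Gb \<beta> u - Gb \<beta> v = (1/\<beta>) * (ln u - ln v) - (3/2)*(u-v)"
    unfolding Gb_def right_diff_distrib by linarith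
  ultimately show ?thesis by linarith
qed

lemma G_anti_right:
  assumes b: "\<beta> > 0" and "lb \<beta> \<le> v" "v < u"
  shows "Gb \<beta> u < Gb \<beta> v"
proof -
  have v0: "v > 0" using assms lb_pos[OF b] by linarith
  have "ln (u/v) < u/v - 1" using ln_gt_lin[of "u/v"] assms v0 by (simp add: field_simps)
  then have "ln u - ln v < (u-v)/v" using assms v0 by (simp add: ln_div field_simps)
  moreover have "1/(\<beta>* v) \<le> 3/2" using assms v0 unfolding lb_def by (simp add: field_simps)
  then have "(u-v) * (1/(\<beta>* v)) \<le> (u-v) * (3/2)" using assms
    by (intro mult_left_mono) auto
  then have "(u-v)/v * (1/\<beta>) \<le> (3/2)*(u-v)" by (simp add: field_simps)
  moreover have "(1/\<beta>) * (ln u - ln v) < (1/\<beta>) * ((u-v)/v)"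
    using calculation(1) b by (intro mult_strict_left_mono) auto
  moreover have "(1/\<beta>) * ((u-v)/v) = (u-v)/v * (1/\<beta>)" by simp
  ultimately have "(1/\<beta>) * (ln u - ln v) < (3/2)*(u-v)" by linarith
  moreover have "Gb \<beta> u - Gb \<beta> v = (1/\<beta>) * (ln u - ln v) - (3/2)*(u-v)"
    unfolding Gb_def right_diff_distrib by linarith
  ultimately show ?thesis by linarith
qed


lemma G_lt_g: assumes "\<beta> > 0" "x > 0" "x \<noteq> lb \<beta>" shows "Gb \<beta> x < gb \<beta>"
  using assms G_mono_left[of \<beta> x "lb \<beta>"] G_anti_right[of \<beta> "lb \<beta>" x] unfolding gb_def
  by (cases "x < lb \<beta>") auto

lemma G_cont: "continuous_on {a..b} (Gb \<beta>)" if "a > 0" for a b :: real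
  unfolding Gb_def using that by (intro continuous_intros) auto

lemma H_exists:
  assumes b: "\<beta> > 0" and y: "y < gb \<beta>"
  shows "\<exists>x. 0 < x \<and> x < lb \<beta> \<and> Gb \<beta> x = y"
proof -
  define e where "e = min (lb \<beta> / 2) (exp (\<beta> * y))"
  have e0: "e > 0" "e < lb \<beta>" using lb_pos[OF b] unfolding e_def by auto
  have "ln e \<le> \<beta> * y" unfolding e_def using lb_pos[OF b]
    by (metis exp_gt_zero ln_exp ln_le_cancel_iff min.cobounded2 min_def e_def e0(1))
  then have "(1/\<beta>) * ln e \<le> y" using b by (simp add: field_simps)
  then have "Gb \<beta> e \<le> y" unfolding Gb_def using e0 by simp
  moreover have "y \<le> Gb \<beta> (lb \<beta>)" using y unfolding gb_def by simp
  ultimately obtain x where x: "e \<le> x" "x \<le> lb \<beta>" "Gb \<beta> x = y"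
    using IVT'[of "Gb \<beta>" e y "lb \<beta>"] G_cont[OF e0(1)] e0 by auto
  then have "x \<noteq> lb \<beta>" using y unfolding gb_def by auto
  then show ?thesis using x e0 by (intro exI[of _ x]) auto
qed

lemma K_exists:
  assumes b: "\<beta> > 2" and y: "y < gb \<beta>"
  shows "\<exists>x. lb \<beta> < x \<and> Gb \<beta> x = y"
proof -
  have b0: "\<beta> > 0" using b by simp
  define M where "M = (\<bar>y\<bar>+1) + lb \<beta>"
  have M: "M > lb \<beta>" "M \<ge> \<bar>y\<bar> + 1" "M > 0" using lb_pos[OF b0] unfolding M_def by auto
  have "ln M \<le> M - 1" using M by (intro ln_le_minus_one) auto
  then have "(1/\<beta>) * ln M \<le> (1/\<beta>) * M" using b0 M by (simp add: field_simps)
  also have "\<dots> \<le> M/2" using b M by (simp add: field_simps)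
  finally have "Gb \<beta> M \<le> - M" unfolding Gb_def by linarith
  then have "Gb \<beta> M \<le> y" using M by linarith
  moreover have "y \<le> Gb \<beta> (lb \<beta>)" using y unfolding gb_def by simp
  ultimately obtain x where x: "lb \<beta> \<le> x" "x \<le> M" "Gb \<beta> x = y"
    using IVT2'[of "Gb \<beta>" M y "lb \<beta>"] G_cont[OF lb_pos[OF b0]] M by auto
  then have "x \<noteq> lb \<beta>" using y unfolding gb_def by auto
  then show ?thesis using x by (intro exI[of _ x]) auto
qed

lemma H_unique: assumes "\<beta> > 0" "0 < x" "x < lb \<beta>" "0 < x'" "x' < lb \<beta>" "Gb \<beta> x = Gb \<beta> x'"
  shows "x = x'"
  using assms G_mono_left[of \<beta> x x'] G_mono_left[of \<beta> x' x] by (metis linorder_neq_iff order.strict_iff_not order_le_less)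

lemma K_unique: assumes "\<beta> > 0" "lb \<beta> < x" "lb \<beta> < x'" "Gb \<beta> x = Gb \<beta> x'"
  shows "x = x'"
  using assms G_anti_right[of \<beta> x x'] G_anti_right[of \<beta> x' x] by (metis linorder_neq_iff order.strict_iff_not order_le_less)

lemma Hb_prop: assumes "\<beta> > 0" "y < gb \<beta>"
  shows "0 < Hb \<beta> y \<and> Hb \<beta> y < lb \<beta> \<and> Gb \<beta> (Hb \<beta> y) = y"
proof -
  obtain x where x: "0 < x \<and> x < lb \<beta> \<and> Gb \<beta> x = y" using H_exists assms by blast
  have "(THE x. 0 < x \<and> x < lb \<beta> \<and> Gb \<beta> x = y) = x"
    by (rule the_equality) (use x H_unique[OF assms(1)] in auto)
  then show ?thesis using x assms unfolding Hb_def by auto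
qed

lemma Hb_eq: assumes "\<beta> > 0" "0 < x" "x < lb \<beta>" "Gb \<beta> x = y"
  shows "Hb \<beta> y = x"
proof -
  have "y < gb \<beta>" using G_lt_g assms by auto
  then show ?thesis using Hb_prop[OF assms(1)] H_unique[OF assms(1)] assms by blast
qed

lemma Kb_prop: assumes "\<beta> > 2" "y < gb \<beta>"
  shows "lb \<beta> < Kb \<beta> y \<and> Gb \<beta> (Kb \<beta> y) = y"
proof -
  obtain x where x: "lb \<beta> < x \<and> Gb \<beta> x = y" using K_exists assms by blast
  have "(THE x. lb \<beta> < x \<and> Gb \<beta> x = y) = x"
    by (rule the_equality) (use x K_unique[of \<beta>] assms in auto)
  then show ?thesis using x assms unfolding Kb_def by auto
qed

lemma Kb_eq: assumes "\<beta> > 2" "lb \<beta> < x" "Gb \<beta> x = y"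
  shows "Kb \<beta> y = x"
proof -
  have b0: "\<beta> > 0" using assms by simp
  have "y < gb \<beta>" using G_lt_g[OF b0] assms lb_pos[OF b0] by auto
  then show ?thesis using Kb_prop[OF assms(1)] K_unique[OF b0] assms by blast
qed




definition Dq :: "real \<Rightarrow> real" where "Dq a = ln a - ln (3 - 2*a) + 3 - 3*a"

lemma Dq_deriv: assumes "0 < a" "a < 3/2" shows "DERIV Dq a :> 3*(2*a-1)*(a-1)/(a*(3-2*a))"
proof -
  have ne: "3 - 2*a \<noteq> 0" "a \<noteq> 0" using assms by auto
  have e: "1/a - (-2)/(3 - 2*a) - 3 = 3*(2*a-1)*(a-1)/(a*(3-2*a))"
    using ne by (simp add: field_simps)
  have "DERIV Dq a :> 1/a - (-2)/(3 - 2*a) - 3"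
    unfolding Dq_def using assms
    by (auto intro!: derivative_eq_intros)
  then show ?thesis using e by simp
qed

lemma Dq_cont: "0 < a \<Longrightarrow> b < 3/2 \<Longrightarrow> continuous_on {a..b} Dq"
  unfolding Dq_def by (intro continuous_intros) auto

lemma ln7: "ln (7::real) < 2"
proof -
  have "ln (7::real) = ln 8 + ln (7/8)" by (simp add: ln_div)
  also have "ln (8::real) = 3 * ln 2"
    using ln_realpow[of 2 3] by simp
  also have "ln (7/8::real) \<le> 7/8 - 1" by (rule ln_le_minus_one) simp
  finally show ?thesis using ln2_le_25_over_36 by linarith
qed

lemma Dq_pos: assumes "1/3 \<le> a" "a < 1" shows "Dq a > 0"
proof (cases "a \<ge> 1/2")
  case True
  have "Dq a > Dq 1"
  proof (rule DERIV_neg_imp_decreasing_open[OF assms(2)])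
    fix x assume x: "a < x" "x < 1"
    have "3*(2*x-1)*(x-1)/(x*(3-2*x)) < 0" using x True
      by (intro divide_neg_pos mult_pos_neg) auto
    then show "\<exists>y. DERIV Dq x :> y \<and> y < 0" using Dq_deriv[of x] x True by auto
  next
    show "continuous_on {a..1} Dq" using Dq_cont[of a 1] assms by auto
  qed
  moreover have "Dq 1 = 0" unfolding Dq_def by simp
  ultimately show ?thesis by simp
next
  case False
  have d3: "Dq (1/3) = 2 - ln 7"
  proof -
    have "ln (1/3::real) - ln (3 - 2*(1/3)) = - ln 7" 
      by (simp add: ln_div)
    then show ?thesis unfolding Dq_def by simp
  qed
  have "Dq a \<ge> Dq (1/3)"
  proof (cases "a = 1/3")
    case False
    then have a3: "1/3 < a" using assms by simp
    have "Dq (1/3) < Dq a"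
    proof (rule DERIV_pos_imp_increasing_open[OF a3])
      fix x assume x: "1/3 < x" "x < a"
      have "3*(2*x-1)*(x-1)/(x*(3-2*x)) > 0" using x \<open>\<not> a \<ge> 1/2\<close>
        by (auto simp: zero_less_divide_iff zero_less_mult_iff)
      then show "\<exists>y. DERIV Dq x :> y \<and> 0 < y" using Dq_deriv[of x] x \<open>\<not> a \<ge> 1/2\<close> by auto
    next
      show "continuous_on {1/3..a} Dq" using Dq_cont[of "1/3" a] False assms by auto
    qed
    then show ?thesis by simp
  next
    case True
    then show ?thesis by (simp only: order_refl)
  qed
  then show ?thesis using d3 ln7 by simp
qed

lemma G_scaled: assumes "\<beta> > 0" "a > 0"
  shows "Gb \<beta> (lb \<beta> * a) = (1/\<beta>) * (ln (lb \<beta>) + ln a - a)"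
proof -
  have "ln (lb \<beta> * a) = ln (lb \<beta>) + ln a" using assms lb_pos[OF assms(1)] by (simp add: ln_mult)
  moreover have "(3/2) * (lb \<beta> * a) = (1/\<beta>) * a" using assms unfolding lb_def by simp
  ultimately show ?thesis unfolding Gb_def by (simp add: algebra_simps)
qed

lemma D_G: assumes "\<beta> > 0" "lb \<beta> / 3 \<le> u" "u < lb \<beta>"
  shows "Gb \<beta> (3 * lb \<beta> - 2*u) < Gb \<beta> u"
proof -
  define a where "a = u / lb \<beta>"
  have l: "lb \<beta> > 0" using lb_pos assms by auto
  have a: "1/3 \<le> a" "a < 1" using assms l unfolding a_def by (auto simp: field_simps)
  have u: "u = lb \<beta> * a" "3 * lb \<beta> - 2*u = lb \<beta> * (3 - 2*a)" using l unfolding a_def by (auto simp: field_simps)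
  have "Dq a > 0" using Dq_pos a by auto
  then have "ln (3 - 2*a) - (3 - 2*a) < ln a - a" unfolding Dq_def by simp
  then have "(1/\<beta>) * (ln (lb \<beta>) + ln (3 - 2*a) - (3 - 2*a)) < (1/\<beta>) * (ln (lb \<beta>) + ln a - a)"
    using assms(1) by (intro mult_strict_left_mono) auto
  moreover have "Gb \<beta> (3 * lb \<beta> - 2*u) = (1/\<beta>) * (ln (lb \<beta>) + ln (3 - 2*a) - (3 - 2*a))"
    unfolding u(2) using G_scaled[OF assms(1), of "3-2*a"] a by simp
  moreover have "Gb \<beta> u = (1/\<beta>) * (ln (lb \<beta>) + ln a - a)"
    unfolding u(1) using G_scaled[OF assms(1), of a] a by simp
  ultimately show ?thesis by simp
qed

lemma G_le_left: assumes "\<beta> > 0" "0 < v" "v \<le> u" "u \<le> lb \<beta>" shows "Gb \<beta> v \<le> Gb \<beta> u"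
  using G_mono_left[OF assms(1,2) _ assms(4)] assms(3) by (cases "v = u") auto

lemma G_le_right: assumes "\<beta> > 0" "lb \<beta> \<le> v" "v \<le> u" shows "Gb \<beta> u \<le> Gb \<beta> v"
  using G_anti_right[OF assms(1,2), of u] assms(3) by (cases "v = u") auto

definition Py :: "real \<Rightarrow> real \<Rightarrow> real \<Rightarrow> bool" where
  "Py \<beta> r y \<longleftrightarrow> y \<le> gb \<beta> \<and> Hb \<beta> (y - 3 * r / 2) + Hb \<beta> y + Kb \<beta> y = 1"

lemma lb3: "\<beta> > 2 \<Longrightarrow> 3 * lb \<beta> < 1" unfolding lb_def by (simp add: field_simps)

lemma Py_lt: assumes b: "\<beta> > 2" and r: "r > 0" and P: "Py \<beta> r y" shows "y < gb \<beta>"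
proof (rule ccontr)
  assume "\<not> y < gb \<beta>"
  then have y: "y = gb \<beta>" using P unfolding Py_def by auto
  have b0: "\<beta> > 0" using b by simp
  have "y - 3*r/2 < gb \<beta>" using y r by simp
  then have "Hb \<beta> (y - 3*r/2) < lb \<beta>" using Hb_prop[OF b0] by blast
  moreover have "Hb \<beta> y = lb \<beta>" "Kb \<beta> y = lb \<beta>" using y unfolding Hb_def Kb_def by auto
  ultimately show False using P lb3[OF b] unfolding Py_def by linarith
qed

lemma Py_small: assumes b: "\<beta> > 2" and r: "r > 0" and P: "Py \<beta> r y"
  shows "Hb \<beta> y < lb \<beta> / 3" "Hb \<beta> (y - 3*r/2) < Hb \<beta> y"
proof -
  have b0: "\<beta> > 0" using b by simp
  have y: "y < gb \<beta>" using Py_lt assms by blast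
  have y': "y - 3*r/2 < gb \<beta>" using y r by simp
  define u v w where "u = Hb \<beta> y" "v = Kb \<beta> y" "w = Hb \<beta> (y - 3*r/2)"
  have u: "0 < u" "u < lb \<beta>" "Gb \<beta> u = y" using Hb_prop[OF b0 y] unfolding u_v_w_def by auto
  have v: "lb \<beta> < v" "Gb \<beta> v = y" using Kb_prop[OF b y] unfolding u_v_w_def by auto
  have w: "0 < w" "w < lb \<beta>" "Gb \<beta> w = y - 3*r/2" using Hb_prop[OF b0 y'] unfolding u_v_w_def by auto
  have sum: "w + u + v = 1" using P unfolding Py_def u_v_w_def by simp
  show wu: "Hb \<beta> (y - 3*r/2) < Hb \<beta> y"
  proof (rule ccontr)
    assume "\<not> ?thesis"
    then have "u \<le> w" unfolding u_v_w_def by simp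
    then have "Gb \<beta> u \<le> Gb \<beta> w" using G_le_left[OF b0 u(1) \<open>u \<le> w\<close>] w by auto
    then show False using u w r by simp
  qed
  show "Hb \<beta> y < lb \<beta> / 3"
  proof (rule ccontr)
    assume "\<not> ?thesis"
    then have u3: "lb \<beta> / 3 \<le> u" unfolding u_v_w_def by simp
    have "Gb \<beta> (3 * lb \<beta> - 2*u) < Gb \<beta> v" using D_G[OF b0 u3 u(2)] u v by simp
    then have "v < 3 * lb \<beta> - 2*u" using G_le_right[OF b0, of "3 * lb \<beta> - 2*u" v] u
      by (cases "v < 3 * lb \<beta> - 2*u") auto
    then have "w + u + v < 3 * lb \<beta>" using wu unfolding u_v_w_def by simp
    then show False using sum lb3[OF b] by simp
  qed
qed

lemma slope_left: assumes "\<beta> > 0" "0 < p" "p < q" "q \<le> lb \<beta> / 3"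
  shows "3 * (q - p) \<le> Gb \<beta> q - Gb \<beta> p"
proof -
  have "1 - p/q < ln (q/p)" using ln_gt_inv[of "q/p"] assms by (simp add: field_simps)
  then have A: "(q-p)/q < ln q - ln p" using assms by (simp add: ln_div field_simps)
  have "1/(\<beta>*q) \<ge> 9/2" using assms unfolding lb_def by (simp add: field_simps)
  then have "(q-p) * (1/(\<beta>*q)) \<ge> (q-p) * (9/2)" using assms
    by (intro mult_left_mono) auto
  then have B: "(q-p)/q * (1/\<beta>) \<ge> (9/2)*(q-p)" by (simp add: field_simps)
  have C: "(1/\<beta>) * (ln q - ln p) > (1/\<beta>) * ((q-p)/q)"
    using A assms by (intro mult_strict_left_mono) auto
  have E: "(1/\<beta>) * ((q-p)/q) = (q-p)/q * (1/\<beta>)" by simp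
  have "Gb \<beta> q - Gb \<beta> p = (1/\<beta>) * (ln q - ln p) - (3/2)*(q-p)"
    unfolding Gb_def right_diff_distrib by linarith
  then show ?thesis using B C E by linarith
qed

lemma slope_right: assumes "\<beta> > 0" "0 < p" "p < q"
  shows "Gb \<beta> p - Gb \<beta> q < (3/2) * (q - p)"
proof -
  have "ln p < ln q" using assms by simp
  then have "(1/\<beta>) * ln p < (1/\<beta>) * ln q" using assms by (intro mult_strict_left_mono) auto
  moreover have "Gb \<beta> p - Gb \<beta> q = (1/\<beta>) * ln p - (1/\<beta>) * ln q - ((3/2)*p-(3/2)*q)"
    unfolding Gb_def right_diff_distrib by linarith
  moreover have "(3/2)*(q-p) = (3/2)*q-(3/2)*p" by (rule right_diff_distrib)
  ultimately show ?thesis by linarith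
qed

lemma Py_unique_aux: assumes b: "\<beta> > 2" and r: "r > 0" and P1: "Py \<beta> r z1" and P2: "Py \<beta> r z2"
  and lt: "z1 < z2" shows False
proof -
  have b0: "\<beta> > 0" using b by simp
  have z1: "z1 < gb \<beta>" "z1 - 3*r/2 < gb \<beta>" using Py_lt[OF b r P1] r by auto
  have z2: "z2 < gb \<beta>" "z2 - 3*r/2 < gb \<beta>" using Py_lt[OF b r P2] r by auto
  define u1 v1 w1 where "u1 = Hb \<beta> z1" "v1 = Kb \<beta> z1" "w1 = Hb \<beta> (z1 - 3*r/2)"
  define u2 v2 w2 where "u2 = Hb \<beta> z2" "v2 = Kb \<beta> z2" "w2 = Hb \<beta> (z2 - 3*r/2)"
  have u1: "0 < u1" "u1 < lb \<beta>" "Gb \<beta> u1 = z1" using Hb_prop[OF b0 z1(1)] unfolding u1_v1_w1_def by auto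
  have v1: "lb \<beta> < v1" "Gb \<beta> v1 = z1" using Kb_prop[OF b z1(1)] unfolding u1_v1_w1_def by auto
  have w1: "0 < w1" "w1 < lb \<beta>" "Gb \<beta> w1 = z1 - 3*r/2" using Hb_prop[OF b0 z1(2)] unfolding u1_v1_w1_def by auto
  have u2: "0 < u2" "u2 < lb \<beta>" "Gb \<beta> u2 = z2" using Hb_prop[OF b0 z2(1)] unfolding u2_v2_w2_def by auto
  have v2: "lb \<beta> < v2" "Gb \<beta> v2 = z2" using Kb_prop[OF b z2(1)] unfolding u2_v2_w2_def by auto
  have w2: "0 < w2" "w2 < lb \<beta>" "Gb \<beta> w2 = z2 - 3*r/2" using Hb_prop[OF b0 z2(2)] unfolding u2_v2_w2_def by auto
  have s1: "w1 + u1 + v1 = 1" using P1 unfolding Py_def u1_v1_w1_def by simp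
  have s2: "w2 + u2 + v2 = 1" using P2 unfolding Py_def u2_v2_w2_def by simp
  have sm1: "u1 < lb \<beta> / 3" "w1 < u1" using Py_small[OF b r P1] unfolding u1_v1_w1_def by auto
  have sm2: "u2 < lb \<beta> / 3" "w2 < u2" using Py_small[OF b r P2] unfolding u2_v2_w2_def by auto
  have uu: "u1 < u2"
  proof (rule ccontr)
    assume "\<not> u1 < u2"
    then have "Gb \<beta> u2 \<le> Gb \<beta> u1" using G_le_left[OF b0 u2(1), of u1] u1 by auto
    then show False using u1 u2 lt by simp
  qed
  have ww: "w1 < w2"
  proof (rule ccontr)
    assume "\<not> w1 < w2"
    then have "Gb \<beta> w2 \<le> Gb \<beta> w1" using G_le_left[OF b0 w2(1), of w1] w1 by auto
    then show False using w1 w2 lt by simp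
  qed
  have vv: "v2 < v1"
  proof (rule ccontr)
    assume "\<not> v2 < v1"
    then have "Gb \<beta> v2 \<le> Gb \<beta> v1" using G_le_right[OF b0, of v1 v2] v1 by auto
    then show False using v1 v2 lt by simp
  qed
  have A: "3 * (u2 - u1) \<le> z2 - z1" using slope_left[OF b0 u1(1) uu] sm2 u1 u2 by simp
  have B: "3 * (w2 - w1) \<le> z2 - z1" using slope_left[OF b0 w1(1) ww] sm2 w1 w2 by simp
  have C: "z2 - z1 < (3/2) * (v1 - v2)" using slope_right[OF b0 _ vv] v1 v2 lb_pos[OF b0] by simp
  have A': "3 * u2 - 3 * u1 \<le> z2 - z1" using A by (simp only: right_diff_distrib)
  have B': "3 * w2 - 3 * w1 \<le> z2 - z1" using B by (simp only: right_diff_distrib)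
  have C': "z2 - z1 < (3/2) * v1 - (3/2) * v2" using C by (simp only: right_diff_distrib)
  show False using A' B' C' s1 s2 by linarith
qed

lemma Py_unique: assumes b: "\<beta> > 2" and r: "r > 0" and P1: "Py \<beta> r z1" and P2: "Py \<beta> r z2"
  shows "z1 = z2"
proof (rule ccontr)
  assume "z1 \<noteq> z2"
  then have "z1 < z2 \<or> z2 < z1" by linarith
  then show False using Py_unique_aux[OF b r P1 P2] Py_unique_aux[OF b r P2 P1] by blast
qed

lemma y2_eq: assumes b: "\<beta> > 2" and r: "r > 0" and P: "Py \<beta> r y" shows "y2 \<beta> r = y"
  unfolding y2_def
proof (rule the_equality)
  show "y \<le> gb \<beta> \<and> Hb \<beta> (y - 3 * r / 2) + Hb \<beta> y + Kb \<beta> y = 1" using P unfolding Py_def .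
  fix z assume "z \<le> gb \<beta> \<and> Hb \<beta> (z - 3 * r / 2) + Hb \<beta> z + Kb \<beta> z = 1"
  then have "Py \<beta> r z" unfolding Py_def .
  then show "z = y" using Py_unique[OF b r _ P] by blast
qed




lemma wf_tendsto: "(wfx \<longlongrightarrow> 0) (at_right 0)"
  unfolding wfx_def by real_asymp

lemma wf_cont: "continuous_on {0..} wfx"
proof -
  have "continuous (at x within {0..}) wfx" if x: "x \<ge> 0" for x
  proof (cases "x = 0")
    case True
    have "(wfx \<longlongrightarrow> wfx 0) (at 0 within {0..})"
      using wf_tendsto unfolding at_within_Ici_at_right by (simp add: wfx_def)
    then show ?thesis using True by (simp add: continuous_within)
  next
    case False
    then have "x > 0" using x by simp
    then have "isCont wfx x" unfolding wfx_def by (intro continuous_intros) auto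
    then show ?thesis by (simp add: continuous_at_imp_continuous_within)
  qed
  then show ?thesis by (simp add: continuous_on_eq_continuous_within)
qed

lemma psi_cont: "continuous_on {0..} (psi \<beta>)"
  unfolding psi_def using wf_cont by (intro continuous_intros) auto

lemma Xi_alt: "Xi = ({0..1} \<times> {0..1}) \<inter> {x. fst x + snd x \<le> 1}"
  unfolding Xi_def by auto

lemma Xi_compact: "compact Xi"
  unfolding Xi_alt
  by (intro compact_Int_closed compact_Times compact_Icc closed_Collect_le continuous_intros)

lemma Fb_cont: "continuous_on Xi (\<lambda>x. Fb \<beta> x r)"
proof -
  have e: "Fb \<beta> x r = psi \<beta> (1 - fst x - snd x) + psi \<beta> (fst x) + psi \<beta> (snd x)
      + r*(1 - fst x - snd x) - r/2*(fst x + snd x) + 1/4" for x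
    using Fb_eq[of \<beta> "fst x" "snd x" r] unfolding Fe_def by simp
  have c0: "continuous_on Xi (\<lambda>x. psi \<beta> (1 - fst x - snd x))"
    by (rule continuous_on_compose2[OF psi_cont]) (auto intro!: continuous_intros simp: Xi_def)
  have c1: "continuous_on Xi (\<lambda>x. psi \<beta> (fst x))"
    by (rule continuous_on_compose2[OF psi_cont]) (auto intro!: continuous_intros simp: Xi_def)
  have c2: "continuous_on Xi (\<lambda>x. psi \<beta> (snd x))"
    by (rule continuous_on_compose2[OF psi_cont]) (auto intro!: continuous_intros simp: Xi_def)
  show ?thesis unfolding e by (intro continuous_intros c0 c1 c2)
qed

lemma Fb_min_exists: "\<exists>x\<in>Xi. \<forall>y\<in>Xi. Fb \<beta> x r \<le> Fb \<beta> y r"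
proof -
  have "(0,0) \<in> Xi" unfolding Xi_def by simp
  then show ?thesis using continuous_attains_inf[OF Xi_compact _ Fb_cont] by blast
qed

lemma wf_tangent: assumes "0 < b" "b \<le> a" shows "wfx b + (a - b) * (ln (3*b) + 1) \<le> wfx a"
proof -
  have "ln (b/a) \<le> b/a - 1" using assms by (intro ln_le_minus_one) auto
  then have "ln a - ln b \<ge> 1 - b/a" using assms by (simp add: ln_div)
  then have "a * (ln a - ln b) \<ge> a * (1 - b/a)" using assms by (intro mult_left_mono) auto
  moreover have "a * (1 - b/a) = a - b" using assms by (simp add: field_simps)
  ultimately have "a * (ln a - ln b) \<ge> a - b" by simp
  moreover have "ln (3*a) = ln 3 + ln a" "ln (3*b) = ln 3 + ln b" using assms by (auto simp: ln_mult)
  ultimately show ?thesis unfolding wfx_def by (simp add: algebra_simps)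
qed

lemma psi0: "psi \<beta> 0 = 0" unfolding psi_def wfx_def by simp

lemma boundary_perturb:
  assumes b: "\<beta> > 0" and r: "r \<ge> 0" and xj: "1/3 \<le> xj" "xj \<le> 1" and c: "ck - cj \<le> 3*r/2"
    and e: "\<epsilon> = exp (-\<beta>*(2+2*r))/6"
  shows "psi \<beta> \<epsilon> + psi \<beta> (xj - \<epsilon>) + ck*\<epsilon> + cj*(xj - \<epsilon>) < psi \<beta> 0 + psi \<beta> xj + cj*xj"
proof -
  have e0: "\<epsilon> > 0" unfolding e by simp
  have "exp (-\<beta>*(2+2*r)) \<le> 1" using b r by simp
  then have e1: "\<epsilon> \<le> 1/6" using e by simp
  have bpos: "xj - \<epsilon> \<ge> 1/6" using xj e1 by simp
  have "ln (3*(xj - \<epsilon>)) \<ge> ln (1/2)" using bpos by (subst ln_le_cancel_iff) auto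
  moreover have "ln (1/2::real) = - ln 2" by (simp add: ln_div)
  ultimately have "ln (3*(xj - \<epsilon>)) + 1 > 0" using ln_2_less_1 by linarith
  then have "\<epsilon> * (ln (3*(xj - \<epsilon>)) + 1) > 0" using e0 by simp
  moreover have "wfx (xj - \<epsilon>) + (xj - (xj - \<epsilon>)) * (ln (3*(xj - \<epsilon>)) + 1) \<le> wfx xj"
    using bpos e0 by (intro wf_tangent) auto
  ultimately have w1: "wfx (xj - \<epsilon>) \<le> wfx xj" by simp
  have "ln (3*\<epsilon>) = -\<beta>*(2+2*r) - ln 2" unfolding e by (simp add: ln_div)
  then have "ln (3*\<epsilon>) \<le> -\<beta>*(2+2*r)" by simp
  then have "\<epsilon> * ln (3*\<epsilon>) \<le> \<epsilon> * (-\<beta>*(2+2*r))" using e0 by (intro mult_left_mono) auto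
  then have "wfx \<epsilon> \<le> - \<beta> * (\<epsilon>*(2+2*r))" unfolding wfx_def by (simp add: algebra_simps)
  then have "(1/\<beta>) * wfx \<epsilon> \<le> (1/\<beta>) * (- \<beta> * (\<epsilon>*(2+2*r)))" using b by (intro mult_left_mono) auto
  then have w2: "(1/\<beta>) * wfx \<epsilon> \<le> - (\<epsilon>*(2+2*r))" using b by simp
  have w3: "(1/\<beta>) * wfx (xj - \<epsilon>) \<le> (1/\<beta>) * wfx xj" using w1 b by (intro mult_left_mono) auto
  have q: "- (3/4) * \<epsilon>^2 - (3/4)*(xj - \<epsilon>)^2 + (3/4)*xj^2 \<le> (3/2)*\<epsilon>"
  proof -
    have "- (3/4) * \<epsilon>^2 - (3/4)*(xj - \<epsilon>)^2 + (3/4)*xj^2 = (3/2)*\<epsilon>*xj - (3/2)*\<epsilon>^2"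
      by (simp add: power2_eq_square algebra_simps)
    also have "\<dots> \<le> (3/2)*\<epsilon>*xj" by simp
    also have "\<dots> \<le> (3/2)*\<epsilon>" using xj e0 by simp
    finally show ?thesis .
  qed
  have cc: "(ck - cj)*\<epsilon> \<le> (3*r/2)*\<epsilon>" using c e0 by (intro mult_right_mono) auto
  have "psi \<beta> \<epsilon> + psi \<beta> (xj - \<epsilon>) + ck*\<epsilon> + cj*(xj - \<epsilon>) - (psi \<beta> 0 + psi \<beta> xj + cj*xj)
     = (1/\<beta>) * wfx \<epsilon> + (1/\<beta>) * wfx (xj - \<epsilon>) - (1/\<beta>) * wfx xj
       + (- (3/4) * \<epsilon>^2 - (3/4)*(xj - \<epsilon>)^2 + (3/4)*xj^2) + (ck - cj)*\<epsilon>"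
    unfolding psi_def by (simp add: algebra_simps wfx_def)
  also have "\<dots> \<le> - (\<epsilon>*(2+2*r)) + (3/2)*\<epsilon> + (3*r/2)*\<epsilon>"
    using w2 w3 q cc by linarith
  also have "\<dots> < 0" using e0 r by (simp add: algebra_simps) (smt (verit) mult_nonneg_nonneg)
  finally show ?thesis by simp
qed

definition psid :: "real \<Rightarrow> real \<Rightarrow> real" where "psid \<beta> t = (1/\<beta>)*(ln (3*t)+1) - (3/2)*t"

lemma wf_deriv: "t > 0 \<Longrightarrow> DERIV wfx t :> ln (3*t) + 1"
  unfolding wfx_def by (auto intro!: derivative_eq_intros simp: field_simps)

lemma psi_deriv: assumes "t > 0" shows "DERIV (psi \<beta>) t :> psid \<beta> t"
proof -
  have "DERIV (\<lambda>t. (1/\<beta>) * wfx t - (3/4) * t^2) t :> (1/\<beta>) * (ln (3*t) + 1) - (3/4) * (2 * t)"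
  proof (rule DERIV_diff)
    show "DERIV (\<lambda>t. (1/\<beta>) * wfx t) t :> (1/\<beta>) * (ln (3*t) + 1)"
      by (rule DERIV_cmult[OF wf_deriv[OF assms]])
    show "DERIV (\<lambda>t. (3/4) * t^2) t :> (3/4) * (2 * t)"
      by (auto intro!: derivative_eq_intros)
  qed
  then show ?thesis unfolding psid_def psi_def[abs_def] by simp
qed

lemma psid_G: "t > 0 \<Longrightarrow> psid \<beta> t = Gb \<beta> t + (1/\<beta>)*(ln 3 + 1)"
  unfolding psid_def Gb_def by (cases "\<beta> = 0") (simp_all add: ln_mult algebra_simps)

lemma psi_concave: assumes b: "\<beta> > 0" and K: "lb \<beta> \<le> K - t" and t: "t > 0"
  shows "psi \<beta> (K+t) + psi \<beta> (K-t) < 2 * psi \<beta> K"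
proof -
  have l0: "lb \<beta> > 0" using lb_pos b by auto
  obtain z1 where z1: "K < z1" "z1 < K + t" "psi \<beta> (K+t) - psi \<beta> K = (K + t - K) * psid \<beta> z1"
    using MVT2[of K "K+t" "psi \<beta>" "psid \<beta>"] psi_deriv t K l0 by auto
  obtain z2 where z2: "K - t < z2" "z2 < K" "psi \<beta> K - psi \<beta> (K-t) = (K - (K - t)) * psid \<beta> z2"
    using MVT2[of "K-t" K "psi \<beta>" "psid \<beta>"] psi_deriv t K l0 by auto
  have "Gb \<beta> z1 < Gb \<beta> z2" using G_anti_right[OF b, of z2 z1] z1 z2 K by auto
  then have "psid \<beta> z1 < psid \<beta> z2" using psid_G z1 z2 K l0 by auto
  then have "t * psid \<beta> z1 < t * psid \<beta> z2" using t by simp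
  then show ?thesis using z1(3) z2(3) by simp
qed

lemma Fb_swap: "Fb \<beta> (a,b) r = Fb \<beta> (b,a) r"
  unfolding Fb_eq Fe_def by (simp add: algebra_simps)

lemma Xi_swap: "(a,b) \<in> Xi \<longleftrightarrow> (b,a) \<in> Xi"
  unfolding Xi_def by auto

lemma stat1:
  assumes b: "\<beta> > 0" and pos: "a > 0" "b > 0" "1 - a - b > 0"
    and min: "\<forall>y\<in>Xi. Fb \<beta> (a,b) r \<le> Fb \<beta> y r"
  shows "Gb \<beta> a - Gb \<beta> (1-a-b) = 3*r/2"
proof -
  define g where "g s = Fe \<beta> r (1-a-b-s) (a+s) b" for s
  have dg: "DERIV g 0 :> psid \<beta> (1-a-b) * (-1) + psid \<beta> a * 1 + r * (-1) - r/2 * 1"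
  proof -
    have h0: "DERIV (\<lambda>s. 1-a-b-s) 0 :> -1" by (auto intro!: derivative_eq_intros)
    have h1: "DERIV (\<lambda>s. a+s) 0 :> 1" by (auto intro!: derivative_eq_intros)
    have p0: "1-a-b-0 > 0" "a + 0 > 0" using pos by auto
    have d0: "DERIV (\<lambda>s. psi \<beta> (1-a-b-s)) 0 :> psid \<beta> (1-a-b) * (-1)"
      using DERIV_chain2[OF psi_deriv[OF p0(1)] h0] by simp
    have d1: "DERIV (\<lambda>s. psi \<beta> (a+s)) 0 :> psid \<beta> a * 1"
      using DERIV_chain2[OF psi_deriv[OF p0(2)] h1] by simp
    show ?thesis unfolding g_def Fe_def
      by (rule derivative_eq_intros d0 d1 refl)+ simp
  qed
  have lm: "\<forall>s. \<bar>0 - s\<bar> < min a (1-a-b) \<longrightarrow> g 0 \<le> g s"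
  proof (intro allI impI)
    fix s assume "\<bar>0 - s\<bar> < min a (1-a-b)"
    then have "(a+s, b) \<in> Xi" using pos unfolding Xi_def by auto
    then have "Fb \<beta> (a,b) r \<le> Fb \<beta> (a+s,b) r" using min by blast
    then show "g 0 \<le> g s" unfolding g_def Fb_eq by (simp add: algebra_simps)
  qed
  have "min a (1-a-b) > 0" using pos by simp
  from DERIV_local_min[OF dg this lm]
  have "psid \<beta> (1-a-b) * (-1) + psid \<beta> a * 1 + r * (-1) - r/2 * 1 = 0" .
  then have "psid \<beta> a - psid \<beta> (1-a-b) = 3*r/2" by simp
  then show ?thesis using psid_G pos by simp
qed




lemma Fb_expand: "x0 = 1-a-b \<Longrightarrow> Fb \<beta> (a,b) r = psi \<beta> x0 + psi \<beta> a + psi \<beta> b + r*x0 - r/2*a - r/2*b + 1/4"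
  by (simp only: Fb_eq Fe_def) (simp add: algebra_simps)

lemma interior:
  assumes b: "\<beta> > 2" and r: "r > 0" and m: "(a,b) \<in> Xi"
    and min: "\<forall>y\<in>Xi. Fb \<beta> (a,b) r \<le> Fb \<beta> y r"
  shows "a > 0" "b > 0" "1-a-b > 0"
proof -
  have b0: "\<beta> > 0" using b by simp
  define e where "e = exp (-\<beta>*(2+2*r))/6"
  have e0: "e > 0" unfolding e_def by simp
  have "exp (-\<beta>*(2+2*r)) \<le> 1" using b r by simp
  then have e1: "e \<le> 1/6" unfolding e_def by simp
  have nn: "a \<ge> 0" "b \<ge> 0" "1-a-b \<ge> 0" using m unfolding Xi_def by auto
  have key: "False" if "(a',b') \<in> Xi" "Fb \<beta> (a',b') r < Fb \<beta> (a,b) r" for a' b'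
    using min that by force
  note BP = boundary_perturb[OF b0 less_imp_le[OF r] _ _ _ e_def]
  show "1-a-b > 0"
  proof (rule ccontr)
    assume "\<not> 1-a-b > 0"
    then have z: "1-a-b = 0" using nn by simp
    show False
    proof (cases "a \<ge> 1/3")
      case True
      have in1: "(a-e, b) \<in> Xi" using True e0 e1 nn z unfolding Xi_def by auto
      have E1: "Fb \<beta> (a-e, b) r = psi \<beta> (e) + psi \<beta> (a-e) + psi \<beta> (b) + r*(e) - r/2*(a-e) - r/2*(b) + 1/4" by (rule Fb_expand) (use z in simp)
      have E2: "Fb \<beta> (a,b) r = psi \<beta> (0) + psi \<beta> (a) + psi \<beta> (b) + r*(0) - r/2*(a) - r/2*(b) + 1/4" by (rule Fb_expand) (use z in simp)
      have "Fb \<beta> (a-e, b) r - Fb \<beta> (a,b) r = (psi \<beta> e + psi \<beta> (a - e) + r*e + (-r/2)*(a - e)) - (psi \<beta> 0 + psi \<beta> a + (-r/2)*a)"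
        using z unfolding E1 E2 by (simp add: algebra_simps)
      moreover have "psi \<beta> e + psi \<beta> (a - e) + r*e + (-r/2)*(a - e) < psi \<beta> 0 + psi \<beta> a + (-r/2)*a"
        using BP[of a r "-r/2"] True nn z by simp
      ultimately show False using key[OF in1] by simp
    next
      case False
      then have bb: "b \<ge> 1/3" using z by simp
      have in1: "(a, b-e) \<in> Xi" using bb e0 e1 nn z unfolding Xi_def by auto
      have E1: "Fb \<beta> (a, b-e) r = psi \<beta> (e) + psi \<beta> (a) + psi \<beta> (b-e) + r*(e) - r/2*(a) - r/2*(b-e) + 1/4" by (rule Fb_expand) (use z in simp)
      have E2: "Fb \<beta> (a,b) r = psi \<beta> (0) + psi \<beta> (a) + psi \<beta> (b) + r*(0) - r/2*(a) - r/2*(b) + 1/4" by (rule Fb_expand) (use z in simp)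
      have "Fb \<beta> (a, b-e) r - Fb \<beta> (a,b) r = (psi \<beta> e + psi \<beta> (b - e) + r*e + (-r/2)*(b - e)) - (psi \<beta> 0 + psi \<beta> b + (-r/2)*b)"
        using z unfolding E1 E2 by (simp add: algebra_simps)
      moreover have "psi \<beta> e + psi \<beta> (b - e) + r*e + (-r/2)*(b - e) < psi \<beta> 0 + psi \<beta> b + (-r/2)*b"
        using BP[of b r "-r/2"] bb nn z by simp
      ultimately show False using key[OF in1] by simp
    qed
  qed
  show "a > 0"
  proof (rule ccontr)
    assume "\<not> a > 0"
    then have z: "a = 0" using nn by simp
    show False
    proof (cases "b \<ge> 1/3")
      case True
      have in1: "(e, b-e) \<in> Xi" using True e0 e1 nn z unfolding Xi_def by auto
      have E1: "Fb \<beta> (e, b-e) r = psi \<beta> (1-b) + psi \<beta> (e) + psi \<beta> (b-e) + r*(1-b) - r/2*(e) - r/2*(b-e) + 1/4" by (rule Fb_expand) (use z in simp)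
      have E2: "Fb \<beta> (a,b) r = psi \<beta> (1-b) + psi \<beta> (a) + psi \<beta> (b) + r*(1-b) - r/2*(a) - r/2*(b) + 1/4" by (rule Fb_expand) (use z in simp)
      have "Fb \<beta> (e, b-e) r - Fb \<beta> (a,b) r = (psi \<beta> e + psi \<beta> (b - e) + (-r/2)*e + (-r/2)*(b - e)) - (psi \<beta> 0 + psi \<beta> b + (-r/2)*b)"
        using z unfolding E1 E2 by (simp add: algebra_simps)
      moreover have "psi \<beta> e + psi \<beta> (b - e) + (-r/2)*e + (-r/2)*(b - e) < psi \<beta> 0 + psi \<beta> b + (-r/2)*b"
        using BP[of b "-r/2" "-r/2"] True nn z r by simp
      ultimately show False using key[OF in1] by simp
    next
      case False
      then have bb: "1-a-b \<ge> 1/3" using z by simp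
      have in1: "(e, b) \<in> Xi" using bb e0 e1 nn z unfolding Xi_def by auto
      have E1: "Fb \<beta> (e, b) r = psi \<beta> (1-e-b) + psi \<beta> (e) + psi \<beta> (b) + r*(1-e-b) - r/2*(e) - r/2*(b) + 1/4" by (rule Fb_expand) (use z in simp)
      have E2: "Fb \<beta> (a,b) r = psi \<beta> (1-a-b) + psi \<beta> (a) + psi \<beta> (b) + r*(1-a-b) - r/2*(a) - r/2*(b) + 1/4" by (rule Fb_expand) (use z in simp)
      have "Fb \<beta> (e, b) r - Fb \<beta> (a,b) r = (psi \<beta> e + psi \<beta> ((1-a-b) - e) + (-r/2)*e + r*((1-a-b) - e)) - (psi \<beta> 0 + psi \<beta> (1-a-b) + r*(1-a-b))"
        using z unfolding E1 E2 by (simp add: algebra_simps)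
      moreover have "psi \<beta> e + psi \<beta> ((1-a-b) - e) + (-r/2)*e + r*((1-a-b) - e) < psi \<beta> 0 + psi \<beta> (1-a-b) + r*(1-a-b)"
        using BP[of "1-a-b" "-r/2" r] bb nn z r by simp
      ultimately show False using key[OF in1] by simp
    qed
  qed
  show "b > 0"
  proof (rule ccontr)
    assume "\<not> b > 0"
    then have z: "b = 0" using nn by simp
    show False
    proof (cases "a \<ge> 1/3")
      case True
      have in1: "(a-e, e) \<in> Xi" using True e0 e1 nn z unfolding Xi_def by auto
      have E1: "Fb \<beta> (a-e, e) r = psi \<beta> (1-a) + psi \<beta> (a-e) + psi \<beta> (e) + r*(1-a) - r/2*(a-e) - r/2*(e) + 1/4" by (rule Fb_expand) (use z in simp)
      have E2: "Fb \<beta> (a,b) r = psi \<beta> (1-a) + psi \<beta> (a) + psi \<beta> (b) + r*(1-a) - r/2*(a) - r/2*(b) + 1/4" by (rule Fb_expand) (use z in simp)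
      have "Fb \<beta> (a-e, e) r - Fb \<beta> (a,b) r = (psi \<beta> e + psi \<beta> (a - e) + (-r/2)*e + (-r/2)*(a - e)) - (psi \<beta> 0 + psi \<beta> a + (-r/2)*a)"
        using z unfolding E1 E2 by (simp add: algebra_simps)
      moreover have "psi \<beta> e + psi \<beta> (a - e) + (-r/2)*e + (-r/2)*(a - e) < psi \<beta> 0 + psi \<beta> a + (-r/2)*a"
        using BP[of a "-r/2" "-r/2"] True nn z r by simp
      ultimately show False using key[OF in1] by simp
    next
      case False
      then have bb: "1-a-b \<ge> 1/3" using z by simp
      have in1: "(a, e) \<in> Xi" using bb e0 e1 nn z unfolding Xi_def by auto
      have E1: "Fb \<beta> (a, e) r = psi \<beta> (1-a-e) + psi \<beta> (a) + psi \<beta> (e) + r*(1-a-e) - r/2*(a) - r/2*(e) + 1/4" by (rule Fb_expand) (use z in simp)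
      have E2: "Fb \<beta> (a,b) r = psi \<beta> (1-a-b) + psi \<beta> (a) + psi \<beta> (b) + r*(1-a-b) - r/2*(a) - r/2*(b) + 1/4" by (rule Fb_expand) (use z in simp)
      have "Fb \<beta> (a, e) r - Fb \<beta> (a,b) r = (psi \<beta> e + psi \<beta> ((1-a-b) - e) + (-r/2)*e + r*((1-a-b) - e)) - (psi \<beta> 0 + psi \<beta> (1-a-b) + r*(1-a-b))"
        using z unfolding E1 E2 by (simp add: algebra_simps)
      moreover have "psi \<beta> e + psi \<beta> ((1-a-b) - e) + (-r/2)*e + r*((1-a-b) - e) < psi \<beta> 0 + psi \<beta> (1-a-b) + r*(1-a-b)"
        using BP[of "1-a-b" "-r/2" r] bb nn z r by simp
      ultimately show False using key[OF in1] by simp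
    qed
  qed
qed


lemma swap01: "Fb \<beta> (1-a-b, b) r - Fb \<beta> (a,b) r = (3*r/2)*(a - (1-a-b))"
proof -
  have E1: "Fb \<beta> (1-a-b, b) r = psi \<beta> a + psi \<beta> (1-a-b) + psi \<beta> b + r*a - r/2*(1-a-b) - r/2*b + 1/4"
    by (rule Fb_expand) simp
  have E2: "Fb \<beta> (a, b) r = psi \<beta> (1-a-b) + psi \<beta> a + psi \<beta> b + r*(1-a-b) - r/2*a - r/2*b + 1/4"
    by (rule Fb_expand) simp
  show ?thesis unfolding E1 E2 by (simp add: field_simps)
qed

lemma min_x0_le:
  assumes r: "r > 0" and m: "(a,b) \<in> Xi" and min: "\<forall>y\<in>Xi. Fb \<beta> (a,b) r \<le> Fb \<beta> y r"
  shows "1-a-b \<le> a"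
proof (rule ccontr)
  assume "\<not> 1-a-b \<le> a"
  then have "(3*r/2)*(a - (1-a-b)) < 0" using r by (simp add: mult_pos_neg)
  then have "Fb \<beta> (1-a-b, b) r < Fb \<beta> (a,b) r" using swap01[of \<beta> a b r] by simp
  moreover have "(1-a-b, b) \<in> Xi" using m unfolding Xi_def by auto
  ultimately show False using min by force
qed

lemma minimizer_structure:
  assumes b: "\<beta> > 2" and r: "r > 0" and m: "(a,b) \<in> Xi"
    and min: "\<forall>y\<in>Xi. Fb \<beta> (a,b) r \<le> Fb \<beta> y r"
  shows "\<exists>y. Py \<beta> r y \<and> ((a,b) = (Hb \<beta> y, Kb \<beta> y) \<or> (a,b) = (Kb \<beta> y, Hb \<beta> y))"
proof -
  have b0: "\<beta> > 0" using b by simp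
  have l0: "lb \<beta> > 0" using lb_pos[OF b0] .
  have pos: "a > 0" "b > 0" "1-a-b > 0" using interior[OF b r m min] by auto
  have minS: "\<forall>y\<in>Xi. Fb \<beta> (b,a) r \<le> Fb \<beta> y r" using min Fb_swap[of \<beta> a b r] by simp
  have mS: "(b,a) \<in> Xi" using m Xi_swap by blast
  have st1: "Gb \<beta> a - Gb \<beta> (1-a-b) = 3*r/2" using stat1[OF b0 pos min] .
  have ba: "1-b-a = 1-a-b" by simp
  have "1-b-a > 0" using pos(3) by simp
  from stat1[OF b0 pos(2) pos(1) this minS]
  have st2: "Gb \<beta> b - Gb \<beta> (1-a-b) = 3*r/2" unfolding ba .
  have le1: "1-a-b \<le> a" using min_x0_le[OF r m min] .
  have le2: "1-b-a \<le> b" using min_x0_le[OF r mS minS] .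
  define y where "y = Gb \<beta> a"
  have Gab: "Gb \<beta> b = Gb \<beta> a" using st1 st2 by linarith
  have G0: "Gb \<beta> (1-a-b) = y - 3*r/2" using st1 unfolding y_def by simp
  have l3: "3 * lb \<beta> < 1" using lb3[OF b] .
  have ne: "a \<noteq> b"
  proof
    assume ab: "a = b"
    show False
    proof (cases "a \<le> lb \<beta>")
      case True
      then show False using le1 ab l3 by linarith
    next
      case False
      define t where "t = (a - lb \<beta>)/2"
      have t: "t > 0" "lb \<beta> \<le> a - t" using False unfolding t_def by (auto simp: field_simps)
      have "psi \<beta> (a+t) + psi \<beta> (a-t) < 2 * psi \<beta> a" using psi_concave[OF b0 t(2) t(1)] .
      moreover have E1: "Fb \<beta> (a+t, a-t) r = psi \<beta> (1-a-b) + psi \<beta> (a+t) + psi \<beta> (a-t) + r*(1-a-b) - r/2*(a+t) - r/2*(a-t) + 1/4"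
        by (rule Fb_expand) (use ab in simp)
      moreover have E2: "Fb \<beta> (a, b) r = psi \<beta> (1-a-b) + psi \<beta> a + psi \<beta> b + r*(1-a-b) - r/2*a - r/2*b + 1/4"
        by (rule Fb_expand) simp
      ultimately have "Fb \<beta> (a+t, a-t) r - Fb \<beta> (a, b) r = psi \<beta> (a+t) + psi \<beta> (a-t) - 2 * psi \<beta> a"
        using ab by (simp add: field_simps)
      then have "Fb \<beta> (a+t, a-t) r < Fb \<beta> (a, b) r" using psi_concave[OF b0 t(2) t(1)] by linarith
      moreover have "(a+t, a-t) \<in> Xi" using m ab t l0 unfolding Xi_def by auto
      ultimately show False using min by force
    qed
  qed
  have x0pos: "1-a-b > 0" using pos by simp
  show ?thesis
  proof (cases "a < lb \<beta>")
    case True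
    have bl: "lb \<beta> < b"
    proof (rule ccontr)
      assume "\<not> lb \<beta> < b"
      then have "b \<le> lb \<beta>" by simp
      then show False using ne Gab G_mono_left[OF b0 pos(1) _ ] G_mono_left[OF b0 pos(2)] True
        by (metis less_le linorder_neq_iff)
    qed
    have y: "y < gb \<beta>" using G_lt_g[OF b0 pos(1)] True unfolding y_def by simp
    have Ha: "Hb \<beta> y = a" using Hb_eq[OF b0 pos(1) True] unfolding y_def by simp
    have Kb: "Kb \<beta> y = b" using Kb_eq[OF b bl] Gab unfolding y_def by simp
    have H0: "Hb \<beta> (y - 3*r/2) = 1-a-b" using Hb_eq[OF b0 x0pos _ G0] le1 True by simp
    have "Py \<beta> r y" unfolding Py_def using y H0 Ha Kb by simp
    then show ?thesis using Ha Kb by auto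
  next
    case False
    have bl: "b < lb \<beta>"
    proof (rule ccontr)
      assume "\<not> b < lb \<beta>"
      then have "lb \<beta> \<le> b" "lb \<beta> \<le> a" using False by auto
      then show False using ne Gab G_anti_right[OF b0, of a b] G_anti_right[OF b0, of b a]
        by (metis linorder_neq_iff)
    qed
    have al: "lb \<beta> < a"
    proof (rule ccontr)
      assume "\<not> lb \<beta> < a"
      then have "a = lb \<beta>" using False by simp
      then have "Gb \<beta> b < Gb \<beta> a" using G_lt_g[OF b0 pos(2)] bl unfolding gb_def by simp
      then show False using Gab by simp
    qed
    have Gb_b: "Gb \<beta> b = y" using Gab unfolding y_def by simp
    have y: "y < gb \<beta>" using G_lt_g[OF b0 pos(2)] bl Gb_b by simp
    have Hb': "Hb \<beta> y = b" using Hb_eq[OF b0 pos(2) bl Gb_b] .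
    have Kb': "Kb \<beta> y = a" using Kb_eq[OF b al] unfolding y_def by simp
    have H0: "Hb \<beta> (y - 3*r/2) = 1-a-b" using Hb_eq[OF b0 x0pos _ G0] le2 bl by simp
    have "Py \<beta> r y" unfolding Py_def using y H0 Hb' Kb' by simp
    then show ?thesis using Hb' Kb' by auto
  qed
qed




definition Lf :: "real \<Rightarrow> real" where "Lf t = ln ((1 - 2* t) / t)"

lemma Lf_pos: "0 < t \<Longrightarrow> t < 1/3 \<Longrightarrow> Lf t > 0"
  unfolding Lf_def by (subst ln_gt_zero_iff) (auto simp: field_simps)

lemma hfun_Lf: "hfun t = 1 - 3* t - 3* t* (1-2* t) * Lf t"
  unfolding hfun_def Lf_def by (simp add: algebra_simps)

lemma Lf_deriv: assumes "0 < t" "t < 1/2" shows "DERIV Lf t :> -1/(t* (1-2* t))"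
proof -
  have "DERIV (\<lambda>t. ln ((1 - 2* t) / t)) t :> (1/((1-2* t)/t)) * (((-2) * t - (1 - 2* t) * 1)/(t* t))"
    using assms by (auto intro!: derivative_eq_intros)
  moreover have "(1/((1-2* t)/t)) * (((-2) * t - (1 - 2* t) * 1)/(t* t)) = -1/(t* (1-2* t))"
    using assms by (simp add: field_simps)
  ultimately show ?thesis unfolding Lf_def by simp
qed

lemma h_deriv: assumes "0 < t" "t < 1/2" shows "DERIV hfun t :> -3* (1-4* t)* Lf t"
proof -
  have "DERIV (\<lambda>t. 1 - 3* t - 3* t* (1-2* t) * Lf t) t :>
      0 - 3*1 - ((3*1* (1-2* t) + 3* t* (0-2*1)) * Lf t + 3* t* (1-2* t) * (-1/(t* (1-2* t))))"
    using Lf_deriv[OF assms] by (auto intro!: derivative_eq_intros)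
  moreover have "0 - 3*1 - ((3*1* (1-2* t) + 3* t* (0-2*1)) * Lf t + 3* t* (1-2* t) * (-1/(t* (1-2* t))))
     = -3* (1-4* t)* Lf t"
    using assms by (simp add: field_simps)
  moreover have "hfun = (\<lambda>t. 1 - 3* t - 3* t* (1-2* t) * Lf t)" by (rule ext) (rule hfun_Lf)
  ultimately show ?thesis by simp
qed

lemma h_cont: "0 < a \<Longrightarrow> b < 1/2 \<Longrightarrow> continuous_on {a..b} hfun"
  unfolding hfun_def by (intro continuous_intros) (auto simp: field_simps)

lemma h_decr: assumes "0 < s" "s < t" "t \<le> 1/4" shows "hfun t < hfun s"
proof (rule DERIV_neg_imp_decreasing_open[OF assms(2)])
  fix x assume x: "s < x" "x < t"
  have "(4* x - 1) * Lf x < 0" using x assms Lf_pos[of x] by (intro mult_neg_pos) auto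
  moreover have "-3* (1-4* x)* Lf x = 3* ((4* x - 1) * Lf x)" by (simp add: algebra_simps)
  ultimately have "-3* (1-4* x)* Lf x < 0" by linarith
  then show "\<exists>y. DERIV hfun x :> y \<and> y < 0" using h_deriv[of x] x assms by auto
next
  show "continuous_on {s..t} hfun" using h_cont assms by auto
qed

lemma h_third: "hfun (1/3) = 0" unfolding hfun_def by simp

lemma h_neg: assumes "1/4 \<le> t" "t < 1/3" shows "hfun t < 0"
proof -
  have "hfun t < hfun (1/3)"
  proof (rule DERIV_pos_imp_increasing_open[OF assms(2)])
    fix x assume x: "t < x" "x < 1/3"
    have "(4* x - 1) * Lf x > 0" using x assms Lf_pos[of x] by (intro mult_pos_pos) auto
    moreover have "-3* (1-4* x)* Lf x = 3* ((4* x - 1) * Lf x)" by (simp add: algebra_simps)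
    ultimately have "-3* (1-4* x)* Lf x > 0" by linarith
    then show "\<exists>y. DERIV hfun x :> y \<and> y > 0" using h_deriv[of x] x assms by auto
  next
    show "continuous_on {t..1/3} hfun" using h_cont assms by auto
  qed
  then show ?thesis using h_third by simp
qed


lemma h_lt_lin: "0 < t \<Longrightarrow> t < 1/3 \<Longrightarrow> hfun t < 1 - 3* t"
  using Lf_pos[of t] unfolding hfun_Lf by (simp add: mult_pos_pos)

lemma h_tendsto: "(hfun \<longlongrightarrow> 1) (at_right 0)"
  unfolding hfun_def by real_asymp

lemma h_less: assumes "0 < s" "s < t" "t < kfun r" "r < 1" "hfun t = r" "hfun s = r" "0 < r" shows False
proof -
  have k: "kfun r < 1/3" unfolding kfun_def using assms by simp
  have "t < 1/4"
  proof (rule ccontr)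
    assume "\<not> t < 1/4"
    then have "hfun t < 0" using h_neg[of t] k assms by simp
    then show False using assms(5,7) by linarith
  qed
  then show False using h_decr[of s t] assms by simp
qed

lemma m0_unique: assumes "0 < r" "r < 1" "0 < t" "t < kfun r" "hfun t = r"
  shows "m0fun r = t"
  unfolding m0fun_def
proof (rule the_equality)
  show "0 < t \<and> t < kfun r \<and> hfun t = r" using assms by simp
  fix s assume s: "0 < s \<and> s < kfun r \<and> hfun s = r"
  show "s = t"
  proof (rule ccontr)
    assume "s \<noteq> t"
    then have "s < t \<or> t < s" by linarith
    then show False using h_less[of s t r] h_less[of t s r] s assms by auto
  qed
qed

lemma m0_prop: assumes r: "0 < r" "r < 1"
  shows "0 < m0fun r \<and> m0fun r < 1/4 \<and> m0fun r < kfun r \<and> hfun (m0fun r) = r"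
proof -
  define t1 where "t1 = min (kfun r) (1/4)"
  have k: "0 < kfun r" "kfun r < 1/3" unfolding kfun_def using r by auto
  have t1: "0 < t1" "t1 \<le> 1/4" "t1 \<le> kfun r" unfolding t1_def using k by auto
  have ht1: "hfun t1 < r"
  proof (cases "kfun r \<le> 1/4")
    case True
    then have "t1 = kfun r" unfolding t1_def by simp
    then have "hfun t1 < 1 - 3 * kfun r" using h_lt_lin[of "kfun r"] k by simp
    then show ?thesis unfolding kfun_def by (simp add: field_simps)
  next
    case False
    then have "t1 = 1/4" unfolding t1_def by simp
    then have "hfun t1 = hfun (1/4)" by (rule arg_cong)
    then show ?thesis using h_neg[of "1/4"] r by linarith
  qed
  have "eventually (\<lambda>t. hfun t > r) (at_right 0)"
    using order_tendstoD(1)[OF h_tendsto] r by simp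
  then obtain b where b: "b > 0" "\<And>y. 0 < y \<Longrightarrow> y < b \<Longrightarrow> hfun y > r"
    unfolding eventually_at_right_field by auto
  define e where "e = min (b/2) (t1/2)"
  have e: "0 < e" "e < b" "e < t1" unfolding e_def using b t1 by auto
  have he: "hfun e > r" using b e by simp
  obtain t where t: "e \<le> t" "t \<le> t1" "hfun t = r"
    using IVT2'[of hfun t1 r e] ht1 he e h_cont[of e t1] t1 by auto
  have tt: "t < t1" using t ht1 by (cases "t = t1") auto
  have "m0fun r = t" using m0_unique[OF r, of t] t tt e t1 by simp
  then show ?thesis using t tt e t1 by simp
qed

lemma f_m0: assumes r: "0 < r" "r < 1"
  shows "ffun r (m0fun r) = 2 / (9 * m0fun r * (1 - 2 * m0fun r))"
proof -
  define m where "m = m0fun r"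
  have m: "0 < m" "m < 1/4" "m < kfun r" "hfun m = r" using m0_prop[OF r] unfolding m_def by auto
  have L: "Lf m > 0" using Lf_pos[of m] m by simp
  have D: "1 - r - 3* m = 3* m* (1-2* m)* Lf m" using m(4) unfolding hfun_Lf by simp
  have "ffun r m = 2 / (3 * (1 - r - 3* m)) * Lf m" unfolding ffun_def Lf_def by simp
  also have "\<dots> = 2 / (9 * m * (1 - 2 * m))" unfolding D using L m by (simp add: field_simps)
  finally show ?thesis unfolding m_def .
qed

lemma q_exists: assumes b: "(\<beta>::real) > 2" shows "\<exists>q. 0 < q \<and> q < 1/6 \<and> q* (1-2* q) = 2/(9*\<beta>)"
proof -
  have c: "continuous_on {0..1/6} (\<lambda>t::real. t* (1-2* t))" by (intro continuous_intros)
  have v: "(\<lambda>t::real. t* (1-2* t)) 0 \<le> 2/(9*\<beta>)" "2/(9*\<beta>) \<le> (\<lambda>t::real. t* (1-2* t)) (1/6)"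
    using b by (auto simp: field_simps)
  obtain q where q: "0 \<le> q" "q \<le> 1/6" "q* (1-2* q) = 2/(9*\<beta>)"
    using IVT'[of "\<lambda>t::real. t* (1-2* t)" 0 "2/(9*\<beta>)" "1/6", OF v _ c] by auto
  have "q \<noteq> 0" using q b by auto
  moreover have "q \<noteq> 1/6"
  proof
    assume q6: "q = 1/6"
    have "q * (1 - 2 * q) = 1/9" unfolding q6 by simp
    then have "2/(9*\<beta>) = 1/9" using q by simp
    then have "\<beta> = 2" using b by (simp add: field_simps)
    then show False using b by simp
  qed
  ultimately show ?thesis using q by (intro exI[of _ q]) auto
qed

lemma inv_eq: assumes X: "X > 0" and h: "2/(9*X) = (\<beta>::real)" shows "X = 2/(9*\<beta>)"
proof -
  have "\<beta> * (9*X) = 2" using h X by (auto simp: field_simps)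
  moreover then have "\<beta> \<noteq> 0" by auto
  ultimately show ?thesis by (simp add: field_simps)
qed

lemma quad_incr: assumes "0 < (s::real)" "s < t" "t < 1/4" shows "s* (1-2* s) < t* (1-2* t)"
proof -
  have "t* (1-2* t) - s* (1-2* s) = (t-s)* (1 - 2* (t+s))" by (simp add: algebra_simps)
  moreover have "(t-s)* (1 - 2* (t+s)) > 0" using assms by (intro mult_pos_pos) auto
  ultimately show ?thesis by simp
qed

lemma h16: "hfun (1/6) > 0"
proof -
  have "hfun (1/6) = 1/2 - (1/3) * ln 4"
    unfolding hfun_def by simp
  moreover have "ln (4::real) = 2 * ln 2" using ln_realpow[of 2 2] by simp
  ultimately show ?thesis using ln2_le_25_over_36 by simp
qed

lemma r2_val: assumes b: "\<beta> > 2" and q: "0 < q" "q < 1/6" "q* (1-2* q) = 2/(9*\<beta>)"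
  shows "r2 \<beta> = hfun q" "0 < hfun q" "hfun q < 1" "m0fun (hfun q) = q"
proof -
  have hq1: "hfun q < 1" using h_lt_lin[of q] q by simp
  have hq0: "0 < hfun q" using h_decr[of q "1/6"] h16 q by simp
  have mq: "m0fun (hfun q) = q"
    using m0_unique[OF hq0 hq1 q(1)] h_lt_lin[of q] q unfolding kfun_def by simp
  have "ffun (hfun q) q = 2 / (9 * (q * (1 - 2 * q)))"
    using f_m0[OF hq0 hq1] mq by (simp add: mult.assoc)
  then have fq: "ffun (hfun q) q = \<beta>" using q(3) b by simp
  show "r2 \<beta> = hfun q" unfolding r2_def
  proof (rule the_equality)
    show "0 < hfun q \<and> hfun q < 1 \<and> ffun (hfun q) (m0fun (hfun q)) = \<beta>" using hq0 hq1 fq mq by simp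
    fix r assume r: "0 < r \<and> r < 1 \<and> ffun r (m0fun r) = \<beta>"
    define m where "m = m0fun r"
    have m: "0 < m" "m < 1/4" "m < kfun r" "hfun m = r" using m0_prop[of r] r unfolding m_def by auto
    have "2 / (9 * m * (1 - 2 * m)) = \<beta>" using f_m0[of r] r unfolding m_def by simp
    moreover have X: "m * (1-2 * m) > 0" using m by (intro mult_pos_pos) auto
    ultimately have "2 / (9 * (m * (1 - 2 * m))) = \<beta>" by (simp add: mult.assoc)
    then have "m * (1-2 * m) = 2/(9 * \<beta>)" using inv_eq X by blast
    then have mm: "m * (1-2 * m) = q * (1-2 * q)" using q by simp
    have "m = q"
    proof (rule ccontr)
      assume "m \<noteq> q"
      then have "m < q \<or> q < m" by linarith
      then show False using quad_incr[of m q] quad_incr[of q m] m q mm by auto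
    qed
    then show "r = hfun q" using m by simp
  qed
  show "0 < hfun q" "hfun q < 1" "m0fun (hfun q) = q" using hq0 hq1 mq by auto
qed




lemma ffun_Lf: "ffun r t = 2 / (3 * (1 - r - 3 * t)) * Lf t"
  unfolding ffun_def Lf_def by simp

lemma alg_fd: "(D::real) \<noteq> 0 \<Longrightarrow> u \<noteq> 0 \<Longrightarrow> (0 * (3*D) - 2 * (3 * (0 - 0 - 3 * 1)))/((3*D)*(3*D)) * L + (-1/u) * (2/(3*D)) = (2/3) * (3*u*L - D)/(u * D^2)"
  by (simp add: field_simps power2_eq_square)

lemma f_deriv: assumes "0 < t" "t < 1/3" "1 - r - 3 * t > 0"
  shows "DERIV (ffun r) t :> (2/3) * (r - hfun t) / (t * (1 - 2 * t) * (1 - r - 3 * t)^2)"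
proof -
  have t2: "t < 1/2" using assms by simp
  have ne: "1 - r - 3 * t \<noteq> 0" "t * (1 - 2 * t) \<noteq> 0" using assms by auto
  have dA: "DERIV (\<lambda>t. 2 / (3 * (1 - r - 3 * t))) t :> (0 * (3*(1 - r - 3 * t)) - 2 * (3 * (0 - 0 - 3 * 1)))/((3*(1 - r - 3 * t))*(3*(1 - r - 3 * t)))"
    by (rule DERIV_divide) (use ne(1) in \<open>auto intro!: derivative_eq_intros\<close>)
  have "DERIV (\<lambda>t. 2 / (3 * (1 - r - 3 * t)) * Lf t) t :>
      (0 * (3*(1 - r - 3 * t)) - 2 * (3 * (0 - 0 - 3 * 1)))/((3*(1 - r - 3 * t))*(3*(1 - r - 3 * t))) * Lf t + (-1/(t * (1-2 * t))) * (2 / (3 * (1 - r - 3 * t)))"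
    by (rule DERIV_mult[OF dA Lf_deriv[OF assms(1) t2]])
  also have "(0 * (3*(1 - r - 3 * t)) - 2 * (3 * (0 - 0 - 3 * 1)))/((3*(1 - r - 3 * t))*(3*(1 - r - 3 * t))) * Lf t + (-1/(t * (1-2 * t))) * (2 / (3 * (1 - r - 3 * t)))
     = (2/3) * (3*(t * (1 - 2 * t))*Lf t - (1 - r - 3 * t)) / ((t * (1 - 2 * t)) * (1 - r - 3 * t)^2)"
    by (rule alg_fd[OF ne])
  also have "3*(t * (1 - 2 * t))*Lf t - (1 - r - 3 * t) = r - hfun t"
    unfolding hfun_Lf by (simp add: algebra_simps)
  finally have "DERIV (\<lambda>t. 2 / (3 * (1 - r - 3 * t)) * Lf t) t :> (2/3) * (r - hfun t) / (t * (1 - 2 * t) * (1 - r - 3 * t)^2)" .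
  moreover have "ffun r = (\<lambda>t. 2 / (3 * (1 - r - 3 * t)) * Lf t)" by (rule ext) (rule ffun_Lf)
  ultimately show ?thesis by simp
qed


lemma f_cont: assumes "0 < a" "b < 1/3" "1 - r - 3 * b > 0" shows "continuous_on {a..b} (ffun r)"
  unfolding ffun_def using assms by (intro continuous_intros) (auto simp: field_simps)

lemma f_decr: assumes "0 < s" "s < t" "t \<le> m" "m \<le> 1/4" "m < kfun r" "hfun m = r"
  shows "ffun r t < ffun r s"
proof (rule DERIV_neg_imp_decreasing_open[OF assms(2)])
  fix x assume x: "s < x" "x < t"
  have k: "1 - r - 3 * x > 0" using x assms unfolding kfun_def by simp
  have "hfun x > hfun m" using h_decr[of x m] x assms by simp
  then have "(2/3) * (r - hfun x) < 0" using assms by simp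
  moreover have "t * (1 - 2 * t) * (1 - r - 3 * t)^2 > 0" if "0 < t" "t < 1/2" "1 - r - 3 * t > 0" for t
    using that by (intro mult_pos_pos) auto
  ultimately have "(2/3) * (r - hfun x) / (x * (1 - 2 * x) * (1 - r - 3 * x)^2) < 0"
    using x assms k by (intro divide_neg_pos) auto
  then show "\<exists>y. DERIV (ffun r) x :> y \<and> y < 0" using f_deriv[of x r] x assms k by auto
next
  have "1 - r - 3 * t > 0" using assms unfolding kfun_def by simp
  then show "continuous_on {s..t} (ffun r)" using f_cont[of s t r] assms by simp
qed

lemma pb_prop: assumes b: "\<beta> > 2" and r: "0 < r" "r < r2 \<beta>"
  shows "0 < pb \<beta> r \<and> pb \<beta> r < 1/4"
proof -
  obtain q where q: "0 < q" "q < 1/6" "q * (1-2 * q) = 2/(9 * \<beta>)" using q_exists[OF b] by blast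
  note R = r2_val[OF b q]
  have r1: "r < 1" using r R by simp
  define m where "m = m0fun r"
  have m: "0 < m" "m < 1/4" "m < kfun r" "hfun m = r" using m0_prop[OF r(1) r1] unfolding m_def by auto
  have qm: "q < m"
  proof (rule ccontr)
    assume "\<not> q < m"
    then have "m \<le> q" by simp
    then have "hfun q \<le> hfun m" using h_decr[of m q] m q by (cases "m = q") auto
    then show False using m r R by simp
  qed
  have "q * (1-2 * q) < m * (1-2 * m)" using quad_incr[of q m] q qm m by simp
  then have X: "2/(9 * \<beta>) < m * (1-2 * m)" using q by simp
  have fm: "ffun r m = 2 / (9 * (m * (1 - 2 * m)))" using f_m0[OF r(1) r1] unfolding m_def by (simp add: mult.assoc)
  have mpos: "m * (1-2 * m) > 0" using m by (intro mult_pos_pos) auto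
  have "2 / (9 * (m * (1 - 2 * m))) < 2 / (9 * (2/(9 * \<beta>)))"
    using X mpos b by (intro divide_strict_left_mono mult_strict_left_mono) auto
  then have fmb: "ffun r m < \<beta>" using fm b by simp
  define e where "e = min (m/2) (exp (-2*\<beta>)/2)"
  have e: "0 < e" "e < m" "e \<le> exp (-2*\<beta>)/2" unfolding e_def using m by auto
  have fe: "ffun r e > \<beta>"
  proof -
    have e4: "e \<le> 1/4" using e m by simp
    have "1/(2 * e) \<le> (1 - 2 * e)/e" using e e4 by (simp add: field_simps)
    moreover have "exp (2 * \<beta>) \<le> 1/(2 * e)"
    proof -
      have "2 * e \<le> exp (-2*\<beta>)" using e by simp
      then have "1/exp (-2*\<beta>) \<le> 1/(2 * e)" using e by (intro divide_left_mono) auto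
      then show ?thesis by (simp add: exp_minus field_simps)
    qed
    ultimately have "exp (2 * \<beta>) \<le> (1 - 2 * e)/e" by linarith
    then have L: "2 * \<beta> \<le> Lf e" unfolding Lf_def using e e4 by (subst ln_ge_iff) (auto simp: field_simps)
    have D: "0 < 1 - r - 3 * e" "1 - r - 3 * e \<le> 1" using e m r unfolding kfun_def by auto
    have "ffun r e = 2 / (3 * (1 - r - 3 * e)) * Lf e" by (rule ffun_Lf)
    also have "\<dots> \<ge> 2/3 * Lf e"
    proof -
      have "2 / (3 * (1 - r - 3 * e)) \<ge> 2/3" using D by (simp add: field_simps)
      moreover have "Lf e \<ge> 0" using L b by simp
      ultimately show ?thesis by (intro mult_right_mono) auto
    qed
    finally show ?thesis using L b by simp
  qed
  obtain t where t: "e \<le> t" "t \<le> m" "ffun r t = \<beta>"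
    using IVT2'[of "ffun r" m \<beta> e] fmb fe e f_cont[of e m r] m unfolding kfun_def by auto
  have tm: "t < m" using t fmb by (cases "t = m") auto
  have "pb \<beta> r = t" unfolding pb_def m_def[symmetric]
  proof (rule the_equality)
    show "0 < t \<and> t < m \<and> ffun r t = \<beta>" using t tm e by simp
    fix s assume s: "0 < s \<and> s < m \<and> ffun r s = \<beta>"
    show "s = t"
    proof (rule ccontr)
      assume "s \<noteq> t"
      then have "s < t \<or> t < s" by linarith
      then show False using f_decr[of s t m r] f_decr[of t s m r] s t tm e m by auto
    qed
  qed
  then show ?thesis using t e m by simp
qed




theorem lemma5p9:
  fixes \<beta> :: real
  assumes "\<beta> > 2"
  shows "(\<forall>r. 0 < r \<and> r < r2 \<beta> \<longrightarrow>
            Fb \<beta> (mm1 \<beta> r) r = Fb \<beta> (mm2 \<beta> r) r \<and>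
            Fb \<beta> (mm2 \<beta> r) r < Fb \<beta> (mm0 \<beta> r) r)
       \<and> (\<forall>r > 0. \<forall>x \<in> Xi. Fb \<beta> (mm1 \<beta> r) r \<le> Fb \<beta> x r \<and> Fb \<beta> (mm2 \<beta> r) r \<le> Fb \<beta> x r)"
proof -
  have sw: "Fb \<beta> (mm1 \<beta> r) r = Fb \<beta> (mm2 \<beta> r) r" for r
    unfolding mm1_def mm2_def using Fb_swap by blast
  have conj2: "\<forall>r > 0. \<forall>x \<in> Xi. Fb \<beta> (mm1 \<beta> r) r \<le> Fb \<beta> x r \<and> Fb \<beta> (mm2 \<beta> r) r \<le> Fb \<beta> x r"
  proof (intro allI impI ballI)
    fix r :: real and x assume r: "r > 0" and x: "x \<in> Xi"
    obtain mn where mn: "mn \<in> Xi" "\<forall>y\<in>Xi. Fb \<beta> mn r \<le> Fb \<beta> y r" using Fb_min_exists by blast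
    obtain a b where ab: "mn = (a,b)" by (cases mn) auto
    obtain y where y: "Py \<beta> r y" "(a,b) = (Hb \<beta> y, Kb \<beta> y) \<or> (a,b) = (Kb \<beta> y, Hb \<beta> y)"
      using minimizer_structure[OF assms r] mn ab by blast
    have yy: "y2 \<beta> r = y" using y2_eq[OF assms r y(1)] .
    have "Fb \<beta> mn r = Fb \<beta> (mm1 \<beta> r) r"
      using y(2) sw[of r] unfolding ab mm1_def mm2_def yy by auto
    then have "Fb \<beta> (mm1 \<beta> r) r \<le> Fb \<beta> x r" using mn x by auto
    then show "Fb \<beta> (mm1 \<beta> r) r \<le> Fb \<beta> x r \<and> Fb \<beta> (mm2 \<beta> r) r \<le> Fb \<beta> x r"
      using sw[of r] by simp
  qed
  have conj1: "\<forall>r. 0 < r \<and> r < r2 \<beta> \<longrightarrow>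
            Fb \<beta> (mm1 \<beta> r) r = Fb \<beta> (mm2 \<beta> r) r \<and>
            Fb \<beta> (mm2 \<beta> r) r < Fb \<beta> (mm0 \<beta> r) r"
  proof (intro allI impI conjI)
    fix r :: real assume r: "0 < r \<and> r < r2 \<beta>"
    show "Fb \<beta> (mm1 \<beta> r) r = Fb \<beta> (mm2 \<beta> r) r" by (rule sw)
    define p where "p = pb \<beta> r"
    have p: "0 < p" "p < 1/4" using pb_prop[OF assms] r unfolding p_def by auto
    have z: "(1-p-p, p) \<in> Xi" using p unfolding Xi_def by auto
    have "Fb \<beta> (1-p-p, p) r - Fb \<beta> (p,p) r = (3*r/2)*(p - (1-p-p))" by (rule swap01)
    moreover have "(3*r/2)*(p - (1-p-p)) < 0" using p r by (intro mult_pos_neg) auto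
    ultimately have "Fb \<beta> (1-p-p, p) r < Fb \<beta> (mm0 \<beta> r) r" unfolding mm0_def p_def[symmetric] by simp
    moreover have "Fb \<beta> (mm2 \<beta> r) r \<le> Fb \<beta> (1-p-p, p) r" using conj2 r z by blast
    ultimately show "Fb \<beta> (mm2 \<beta> r) r < Fb \<beta> (mm0 \<beta> r) r" by simp
  qed
  show ?thesis using conj1 conj2 by blast
qed



end
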